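(* A nontrivial commutative ring $A$ is an integral domain if and only if $A$ is the only nonzero ideal of $A$ that is also a factroid of $A$.
   Context: A factroid of $A$ is an additive subgroup $F$ of $A$ such that for all $a\in A$ and every nonzerodivisor $b$ of $A$, $ba\in F$ implies $a\in F$. *)

theory Defs
  imports "HOL-Algebra.Algebra"
begin

definition nonzerodivisor :: "('a, 'b) ring_scheme \<Rightarrow> 'a \<Rightarrow> bool" where
  "nonzerodivisor R b \<longleftrightarrow> b \<in> carrier R \<and>
     (\<forall>a \<in> carrier R. b \<otimes>\<^bsub>R\<^esub> a = \<zero>\<^bsub>R\<^esub> \<longrightarrow> a = \<zero>\<^bsub>R\<^esub>)"

definition factroid :: "('a, 'b) ring_scheme \<Rightarrow> 'a set \<Rightarrow> bool" where
  "factroid R F \<longleftrightarrow> additive_subgroup F R \<and>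
     (\<forall>a \<in> carrier R. \<forall>b. nonzerodivisor R b \<longrightarrow> b \<otimes>\<^bsub>R\<^esub> a \<in> F \<longrightarrow> a \<in> F)"

end

theory Submission
  imports Defs
begin

lemma ann_ideal:
  fixes R (structure)
  assumes "cring R" "b \<in> carrier R"
  shows "ideal {x \<in> carrier R. x \<otimes> b = \<zero>} R"
proof -
  interpret cring R by fact
  show ?thesis
  proof (rule idealI)
    show "ring R" by (rule ring_axioms)
    show "subgroup {x \<in> carrier R. x \<otimes> b = \<zero>} (add_monoid R)"
    proof (rule add.subgroupI)
      show "{x \<in> carrier R. x \<otimes> b = \<zero>} \<subseteq> carrier R" by blast
      show "{x \<in> carrier R. x \<otimes> b = \<zero>} \<noteq> {}" using assms by auto
    next
      fix x assume x: "x \<in> {x \<in> carrier R. x \<otimes> b = \<zero>}"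
      show "\<ominus> x \<in> {x \<in> carrier R. x \<otimes> b = \<zero>}"
        using x assms by (simp add: l_minus)
    next
      fix x y assume x: "x \<in> {x \<in> carrier R. x \<otimes> b = \<zero>}" and y: "y \<in> {x \<in> carrier R. x \<otimes> b = \<zero>}"
      show "x \<oplus> y \<in> {x \<in> carrier R. x \<otimes> b = \<zero>}"
        using x y assms by (simp add: l_distr)
    qed
  next
    fix a x assume "a \<in> {x \<in> carrier R. x \<otimes> b = \<zero>}" "x \<in> carrier R"
    then show "x \<otimes> a \<in> {x \<in> carrier R. x \<otimes> b = \<zero>}" using assms by (simp add: m_assoc)
  next
    fix a x assume "a \<in> {x \<in> carrier R. x \<otimes> b = \<zero>}" "x \<in> carrier R"
    moreover have "a \<otimes> x \<otimes> b = a \<otimes> b \<otimes> x" if "a \<in> carrier R" "x \<in> carrier R"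
      using that assms(2) by (simp add: m_assoc m_comm[of x b])
    ultimately show "a \<otimes> x \<in> {x \<in> carrier R. x \<otimes> b = \<zero>}" using assms by simp
  qed
qed

theorem proposition4p9:
  fixes R (structure)
  assumes "cring R" and "\<one>\<^bsub>R\<^esub> \<noteq> \<zero>\<^bsub>R\<^esub>"
  shows "domain R \<longleftrightarrow>
    {I. ideal I R \<and> I \<noteq> {\<zero>\<^bsub>R\<^esub>} \<and> factroid R I} = {carrier R}"
proof -
  interpret cring R by fact
  have c1: "ideal (carrier R) R" by (rule oneideal)
  have c2: "carrier R \<noteq> {\<zero>}" using assms(2) one_closed by (metis singletonD)
  have c3: "factroid R (carrier R)" unfolding factroid_def
    using ideal.axioms(1)[OF c1] by blast
  have carr: "ideal (carrier R) R \<and> carrier R \<noteq> {\<zero>} \<and> factroid R (carrier R)"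
    using c1 c2 c3 by blast
  show ?thesis
  proof
    assume d: "domain R"
    show "{I. ideal I R \<and> I \<noteq> {\<zero>\<^bsub>R\<^esub>} \<and> factroid R I} = {carrier R}"
    proof (intro Set.set_eqI iffI)
      fix I assume "I \<in> {I. ideal I R \<and> I \<noteq> {\<zero>\<^bsub>R\<^esub>} \<and> factroid R I}"
      then have I0: "ideal I R \<and> I \<noteq> {\<zero>} \<and> factroid R I" by simp
      have I: "ideal I R" "I \<noteq> {\<zero>}" "factroid R I" using I0 by simp_all
      have "\<zero> \<in> I" using I(1) by (simp add: additive_subgroup.zero_closed ideal.axioms(1))
      then obtain x where x: "x \<in> I" "x \<noteq> \<zero>" using I(2) by blast
      have xc: "x \<in> carrier R" using ideal.Icarr[OF I(1) x(1)] .
      have nz: "nonzerodivisor R x" unfolding nonzerodivisor_def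
      proof (intro conjI ballI impI)
        show "x \<in> carrier R" by (rule xc)
        fix a assume a: "a \<in> carrier R" and xa: "x \<otimes> a = \<zero>"
        have "x = \<zero> \<or> a = \<zero>" using domain.integral[OF d xa xc a] .
        then show "a = \<zero>" using x(2) by simp
      qed
      have fI: "\<forall>a\<in>carrier R. \<forall>b. nonzerodivisor R b \<longrightarrow> b \<otimes> a \<in> I \<longrightarrow> a \<in> I"
        using I(3) unfolding factroid_def by simp
      have "carrier R \<subseteq> I"
      proof
        fix a assume a: "a \<in> carrier R"
        have "x \<otimes> a \<in> I" using ideal.I_r_closed[OF I(1) x(1) a] .
        then show "a \<in> I" using fI nz a by simp
      qed
      moreover have "I \<subseteq> carrier R" by (rule subsetI, erule ideal.Icarr[OF I(1)])
      ultimately show "I \<in> {carrier R}" by simp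
    next
      fix I assume "I \<in> {carrier R}"
      then show "I \<in> {I. ideal I R \<and> I \<noteq> {\<zero>\<^bsub>R\<^esub>} \<and> factroid R I}" using carr by simp
    qed
  next
    assume h: "{I. ideal I R \<and> I \<noteq> {\<zero>\<^bsub>R\<^esub>} \<and> factroid R I} = {carrier R}"
    show "domain R"
    proof (rule domain.intro)
      show "cring R" by fact
      show "domain_axioms R"
      proof (rule domain_axioms.intro)
        show "\<one> \<noteq> \<zero>" by fact
        fix a b assume ab: "a \<otimes> b = \<zero>" "a \<in> carrier R" "b \<in> carrier R"
        show "a = \<zero> \<or> b = \<zero>"
        proof (rule ccontr)
          assume "\<not> (a = \<zero> \<or> b = \<zero>)"
          then have an: "a \<noteq> \<zero>" and bn: "b \<noteq> \<zero>" by auto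
          define J where "J = {x \<in> carrier R. x \<otimes> b = \<zero>}"
          have J: "ideal J R" unfolding J_def using ann_ideal[OF assms(1) ab(3)] by simp
          have "a \<in> J" using ab unfolding J_def by simp
          then have "J \<noteq> {\<zero>}" using an by blast
          moreover have "factroid R J" unfolding factroid_def
          proof (intro conjI ballI allI impI)
            show "additive_subgroup J R" using J by (rule ideal.axioms(1))
            fix x c assume x: "x \<in> carrier R" and c: "nonzerodivisor R c" and cx: "c \<otimes> x \<in> J"
            have cc: "c \<in> carrier R" using c unfolding nonzerodivisor_def by simp
            have "c \<otimes> (x \<otimes> b) = \<zero>" using cx cc x ab(3) unfolding J_def by (simp add: m_assoc)
            moreover have "x \<otimes> b \<in> carrier R" using x ab(3) by simp
            ultimately have "x \<otimes> b = \<zero>" using c unfolding nonzerodivisor_def by blast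
            then show "x \<in> J" using x unfolding J_def by blast
          qed
          ultimately have "J \<in> {I. ideal I R \<and> I \<noteq> {\<zero>\<^bsub>R\<^esub>} \<and> factroid R I}" using J by simp
          then have "J = carrier R" using h by simp
          then have "\<one> \<in> J" using one_closed by simp
          then have "\<one> \<otimes> b = \<zero>" unfolding J_def by simp
          then show False using bn ab(3) by simp
        qed
      qed
    qed
  qed
qed

end
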